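(* Let $A=(A,\oplus,\odot)$ be a skew brace, $B$ a characteristic subgroup of $A_{\oplus}$, and $W$ a set of group words. For $x\in A$ denote by $\overline{x}$ the image of $x$ under the natural homomorphism $A_{\oplus}\to A_{\oplus}/B$. If $W(\mathrm{Aut}(A_{\oplus}/B))=1$, then for all $a,b\in W(A_{\odot})$ the equalities $\overline{a\odot b}=\overline{a\oplus b}$ and $\overline{a^{-1}}=\overline{\ominus a}$ hold.
   Context: A skew brace is a set $A$ with two binary operations $\oplus,\odot$ such that $A_{\oplus}=(A,\oplus)$ and $A_{\odot}=(A,\odot)$ are groups and $a\odot(b\oplus c)=(a\odot b)\ominus a\oplus(a\odot c)$ for all $a,b,c\in A$. Here $\ominus a$ is the inverse of $a$ in $A_{\oplus}$ and $a^{-1}$ is the inverse of $a$ in $A_{\odot}$. A group word is an element $w(x_1,\dots,x_n)$ of a free group on $x_1,\dots,x_n$; for a group $G$, $w(G)$ is the subgroup generated by all values $w(g_1,\dots,g_n)$, $g_i\in G$, and for a set $W$ of group words $W(G)$ is the subgroup generated by all $w(G)$, $w\in W$ (the verbal subgroup). *)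

theory Defs
  imports "HOL-Algebra.Algebra"
begin

definition skew_brace :: "('a, 'b) monoid_scheme \<Rightarrow> ('a, 'c) monoid_scheme \<Rightarrow> bool" where
  "skew_brace Ad Mu \<longleftrightarrow> group Ad \<and> group Mu \<and> carrier Ad = carrier Mu \<and>
     (\<forall>a\<in>carrier Ad. \<forall>b\<in>carrier Ad. \<forall>c\<in>carrier Ad.
        a \<otimes>\<^bsub>Mu\<^esub> (b \<otimes>\<^bsub>Ad\<^esub> c)
        = ((a \<otimes>\<^bsub>Mu\<^esub> b) \<otimes>\<^bsub>Ad\<^esub> inv\<^bsub>Ad\<^esub> a) \<otimes>\<^bsub>Ad\<^esub> (a \<otimes>\<^bsub>Mu\<^esub> c))"

text \<open>Group words: an element of the free group on x_0, x_1, ... represented by a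
  (not necessarily reduced) word, i.e. a list of letters (i, e) standing for
  x_i if e = False and x_i^{-1} if e = True.\<close>
type_synonym group_word = "(nat \<times> bool) list"

fun word_value :: "('a, 'b) monoid_scheme \<Rightarrow> group_word \<Rightarrow> (nat \<Rightarrow> 'a) \<Rightarrow> 'a" where
  "word_value G [] g = \<one>\<^bsub>G\<^esub>"
| "word_value G ((i, e) # w) g =
     (if e then inv\<^bsub>G\<^esub> (g i) else g i) \<otimes>\<^bsub>G\<^esub> word_value G w g"

definition verbal_subgroup :: "group_word set \<Rightarrow> ('a, 'b) monoid_scheme \<Rightarrow> 'a set" where
  "verbal_subgroup W G =
     generate G {word_value G w g | w g. w \<in> W \<and> g \<in> UNIV \<rightarrow> carrier G}"

definition characteristic_subgroup :: "'a set \<Rightarrow> ('a, 'b) monoid_scheme \<Rightarrow> bool" where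
  "characteristic_subgroup B G \<longleftrightarrow> subgroup B G \<and> (\<forall>\<sigma>\<in>auto G. \<sigma> ` B = B)"

end

theory Submission
  imports Defs
begin

lemma (in group) inv_cancel_l1:
  "x \<in> carrier G \<Longrightarrow> y \<in> carrier G \<Longrightarrow> inv x \<otimes> (x \<otimes> y) = y"
  by (simp add: m_assoc[symmetric])

lemma (in group) inv_cancel_l2:
  "x \<in> carrier G \<Longrightarrow> y \<in> carrier G \<Longrightarrow> x \<otimes> (inv x \<otimes> y) = y"
  by (simp add: m_assoc[symmetric])

definition lam :: "('a, 'b) monoid_scheme \<Rightarrow> ('a, 'c) monoid_scheme \<Rightarrow> 'a \<Rightarrow> 'a \<Rightarrow> 'a" where
  "lam Ad Mu a = (\<lambda>x\<in>carrier Ad. inv\<^bsub>Ad\<^esub> a \<otimes>\<^bsub>Ad\<^esub> (a \<otimes>\<^bsub>Mu\<^esub> x))"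

lemma brace_one:
  assumes "skew_brace Ad Mu"
  shows "\<one>\<^bsub>Mu\<^esub> = \<one>\<^bsub>Ad\<^esub>"
proof -
  interpret A: group Ad using assms by (simp add: skew_brace_def)
  interpret M: group Mu using assms by (simp add: skew_brace_def)
  have C: "carrier Ad = carrier Mu" using assms by (simp add: skew_brace_def)
  have D: "\<And>a b c. a \<in> carrier Ad \<Longrightarrow> b \<in> carrier Ad \<Longrightarrow> c \<in> carrier Ad \<Longrightarrow>
        a \<otimes>\<^bsub>Mu\<^esub> (b \<otimes>\<^bsub>Ad\<^esub> c)
        = ((a \<otimes>\<^bsub>Mu\<^esub> b) \<otimes>\<^bsub>Ad\<^esub> inv\<^bsub>Ad\<^esub> a) \<otimes>\<^bsub>Ad\<^esub> (a \<otimes>\<^bsub>Mu\<^esub> c)"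
    using assms by (simp add: skew_brace_def)
  let ?a = "\<one>\<^bsub>Mu\<^esub>"
  let ?z = "\<one>\<^bsub>Ad\<^esub>"
  have a: "?a \<in> carrier Ad" using C by simp
  have e: "?a \<otimes>\<^bsub>Mu\<^esub> ?z = ?z" using C A.one_closed by (metis M.l_one)
  have "?a \<otimes>\<^bsub>Mu\<^esub> (?z \<otimes>\<^bsub>Ad\<^esub> ?z) = ((?a \<otimes>\<^bsub>Mu\<^esub> ?z) \<otimes>\<^bsub>Ad\<^esub> inv\<^bsub>Ad\<^esub> ?a) \<otimes>\<^bsub>Ad\<^esub> (?a \<otimes>\<^bsub>Mu\<^esub> ?z)"
    using D[OF a A.one_closed A.one_closed] by simp
  hence "?z \<otimes>\<^bsub>Ad\<^esub> ?z = (?z \<otimes>\<^bsub>Ad\<^esub> inv\<^bsub>Ad\<^esub> ?a) \<otimes>\<^bsub>Ad\<^esub> ?z" using e by simp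
  hence "?z = inv\<^bsub>Ad\<^esub> ?a" using e a by simp
  thus ?thesis using a by (metis A.inv_inv A.inv_one)
qed

lemma lam_auto:
  assumes "skew_brace Ad Mu" and a: "a \<in> carrier Ad"
  shows "lam Ad Mu a \<in> auto Ad"
proof -
  interpret A: group Ad using assms by (simp add: skew_brace_def)
  interpret M: group Mu using assms by (simp add: skew_brace_def)
  have C: "carrier Ad = carrier Mu" using assms by (simp add: skew_brace_def)
  have D: "\<And>a b c. a \<in> carrier Ad \<Longrightarrow> b \<in> carrier Ad \<Longrightarrow> c \<in> carrier Ad \<Longrightarrow>
        a \<otimes>\<^bsub>Mu\<^esub> (b \<otimes>\<^bsub>Ad\<^esub> c)
        = ((a \<otimes>\<^bsub>Mu\<^esub> b) \<otimes>\<^bsub>Ad\<^esub> inv\<^bsub>Ad\<^esub> a) \<otimes>\<^bsub>Ad\<^esub> (a \<otimes>\<^bsub>Mu\<^esub> c)"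
    using assms by (simp add: skew_brace_def)
  have cl: "\<And>x. x \<in> carrier Ad \<Longrightarrow> a \<otimes>\<^bsub>Mu\<^esub> x \<in> carrier Ad" using C a by simp
  have hom: "lam Ad Mu a \<in> hom Ad Ad"
  proof (rule homI)
    fix x assume "x \<in> carrier Ad" thus "lam Ad Mu a x \<in> carrier Ad"
      using a cl by (simp add: lam_def)
  next
    fix x y assume x: "x \<in> carrier Ad" and y: "y \<in> carrier Ad"
    have "lam Ad Mu a (x \<otimes>\<^bsub>Ad\<^esub> y) = inv\<^bsub>Ad\<^esub> a \<otimes>\<^bsub>Ad\<^esub> (((a \<otimes>\<^bsub>Mu\<^esub> x) \<otimes>\<^bsub>Ad\<^esub> inv\<^bsub>Ad\<^esub> a) \<otimes>\<^bsub>Ad\<^esub> (a \<otimes>\<^bsub>Mu\<^esub> y))"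
      using x y a D by (simp add: lam_def)
    also have "\<dots> = (inv\<^bsub>Ad\<^esub> a \<otimes>\<^bsub>Ad\<^esub> (a \<otimes>\<^bsub>Mu\<^esub> x)) \<otimes>\<^bsub>Ad\<^esub> (inv\<^bsub>Ad\<^esub> a \<otimes>\<^bsub>Ad\<^esub> (a \<otimes>\<^bsub>Mu\<^esub> y))"
      using x y a cl by (simp add: A.m_assoc)
    finally show "lam Ad Mu a (x \<otimes>\<^bsub>Ad\<^esub> y) = lam Ad Mu a x \<otimes>\<^bsub>Ad\<^esub> lam Ad Mu a y"
      using x y by (simp add: lam_def)
  qed
  have bij: "bij_betw (lam Ad Mu a) (carrier Ad) (carrier Ad)"
  proof (rule bij_betw_byWitness[where f'="\<lambda>y. inv\<^bsub>Mu\<^esub> a \<otimes>\<^bsub>Mu\<^esub> (a \<otimes>\<^bsub>Ad\<^esub> y)"])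
    show "\<forall>x\<in>carrier Ad. inv\<^bsub>Mu\<^esub> a \<otimes>\<^bsub>Mu\<^esub> (a \<otimes>\<^bsub>Ad\<^esub> lam Ad Mu a x) = x"
    proof
      fix x assume x: "x \<in> carrier Ad"
      have "a \<otimes>\<^bsub>Ad\<^esub> lam Ad Mu a x = a \<otimes>\<^bsub>Mu\<^esub> x"
        using x a cl[OF x] by (simp add: lam_def A.m_assoc[symmetric])
      thus "inv\<^bsub>Mu\<^esub> a \<otimes>\<^bsub>Mu\<^esub> (a \<otimes>\<^bsub>Ad\<^esub> lam Ad Mu a x) = x"
        using x a C by (simp add: M.m_assoc[symmetric])
    qed
    show "\<forall>y\<in>carrier Ad. lam Ad Mu a (inv\<^bsub>Mu\<^esub> a \<otimes>\<^bsub>Mu\<^esub> (a \<otimes>\<^bsub>Ad\<^esub> y)) = y"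
    proof
      fix y assume y: "y \<in> carrier Ad"
      have u: "a \<otimes>\<^bsub>Ad\<^esub> y \<in> carrier Mu" using a y C by auto
      have am: "a \<in> carrier Mu" using a C by auto
      have m: "inv\<^bsub>Mu\<^esub> a \<otimes>\<^bsub>Mu\<^esub> (a \<otimes>\<^bsub>Ad\<^esub> y) \<in> carrier Ad" using u am C by auto
      have "a \<otimes>\<^bsub>Mu\<^esub> (inv\<^bsub>Mu\<^esub> a \<otimes>\<^bsub>Mu\<^esub> (a \<otimes>\<^bsub>Ad\<^esub> y)) = a \<otimes>\<^bsub>Ad\<^esub> y"
        using u am by (simp add: M.m_assoc[symmetric])
      thus "lam Ad Mu a (inv\<^bsub>Mu\<^esub> a \<otimes>\<^bsub>Mu\<^esub> (a \<otimes>\<^bsub>Ad\<^esub> y)) = y"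
        using m a y by (simp add: lam_def A.m_assoc[symmetric])
    qed
    show "lam Ad Mu a ` carrier Ad \<subseteq> carrier Ad" using a cl by (auto simp: lam_def)
    show "(\<lambda>y. inv\<^bsub>Mu\<^esub> a \<otimes>\<^bsub>Mu\<^esub> (a \<otimes>\<^bsub>Ad\<^esub> y)) ` carrier Ad \<subseteq> carrier Ad"
      using a C by auto
  qed
  show ?thesis using hom bij by (simp add: auto_def Bij_def lam_def)
qed

lemma lam_mult:
  assumes sb: "skew_brace Ad Mu" and a: "a \<in> carrier Ad" and b: "b \<in> carrier Ad"
    and x: "x \<in> carrier Ad"
  shows "lam Ad Mu (a \<otimes>\<^bsub>Mu\<^esub> b) x = lam Ad Mu a (lam Ad Mu b x)"
proof -
  interpret A: group Ad using assms by (simp add: skew_brace_def)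
  interpret M: group Mu using assms by (simp add: skew_brace_def)
  have C: "carrier Ad = carrier Mu" using assms by (simp add: skew_brace_def)
  interpret H: group_hom Ad Ad "lam Ad Mu a"
    using lam_auto[OF sb a] by (simp add: group_hom_def group_hom_axioms_def auto_def A.group_axioms)
  have ab: "a \<otimes>\<^bsub>Mu\<^esub> b \<in> carrier Ad" using a b C by simp
  have bx: "b \<otimes>\<^bsub>Mu\<^esub> x \<in> carrier Ad" using x b C by simp
  have abx: "a \<otimes>\<^bsub>Mu\<^esub> (b \<otimes>\<^bsub>Mu\<^esub> x) \<in> carrier Ad" using a bx C by simp
  have "lam Ad Mu a (lam Ad Mu b x) = lam Ad Mu a (inv\<^bsub>Ad\<^esub> b) \<otimes>\<^bsub>Ad\<^esub> lam Ad Mu a (b \<otimes>\<^bsub>Mu\<^esub> x)"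
  proof -
    have "lam Ad Mu b x = inv\<^bsub>Ad\<^esub> b \<otimes>\<^bsub>Ad\<^esub> (b \<otimes>\<^bsub>Mu\<^esub> x)"
      using x by (simp add: lam_def)
    thus ?thesis using b bx by (simp add: H.hom_mult)
  qed
  also have "\<dots> = inv\<^bsub>Ad\<^esub> (lam Ad Mu a b) \<otimes>\<^bsub>Ad\<^esub> lam Ad Mu a (b \<otimes>\<^bsub>Mu\<^esub> x)"
    using b by (simp add: H.hom_inv)
  also have "\<dots> = inv\<^bsub>Ad\<^esub> (inv\<^bsub>Ad\<^esub> a \<otimes>\<^bsub>Ad\<^esub> (a \<otimes>\<^bsub>Mu\<^esub> b)) \<otimes>\<^bsub>Ad\<^esub> (inv\<^bsub>Ad\<^esub> a \<otimes>\<^bsub>Ad\<^esub> (a \<otimes>\<^bsub>Mu\<^esub> (b \<otimes>\<^bsub>Mu\<^esub> x)))"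
    using b bx by (simp add: lam_def)
  also have "\<dots> = inv\<^bsub>Ad\<^esub> (a \<otimes>\<^bsub>Mu\<^esub> b) \<otimes>\<^bsub>Ad\<^esub> (a \<otimes>\<^bsub>Mu\<^esub> (b \<otimes>\<^bsub>Mu\<^esub> x))"
    using a ab abx by (simp add: A.inv_mult_group A.m_assoc A.inv_cancel_l2)
  also have "\<dots> = lam Ad Mu (a \<otimes>\<^bsub>Mu\<^esub> b) x"
    using x a b C by (simp add: lam_def M.m_assoc)
  finally show ?thesis by simp
qed

lemma lam_one:
  assumes sb: "skew_brace Ad Mu" and x: "x \<in> carrier Ad"
  shows "lam Ad Mu \<one>\<^bsub>Mu\<^esub> x = x"
proof -
  interpret A: group Ad using assms by (simp add: skew_brace_def)
  interpret M: group Mu using assms by (simp add: skew_brace_def)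
  have C: "carrier Ad = carrier Mu" using assms by (simp add: skew_brace_def)
  have "lam Ad Mu \<one>\<^bsub>Mu\<^esub> x = inv\<^bsub>Ad\<^esub> \<one>\<^bsub>Mu\<^esub> \<otimes>\<^bsub>Ad\<^esub> x"
    using x C by (simp add: lam_def)
  also have "\<dots> = x" using x by (simp add: brace_one[OF sb])
  finally show ?thesis .
qed

lemma coset_img:
  assumes "group G" "subgroup B G" "\<sigma> \<in> hom G G" "\<sigma> ` B = B" "x \<in> carrier G"
  shows "\<sigma> ` (B #>\<^bsub>G\<^esub> x) = B #>\<^bsub>G\<^esub> \<sigma> x"
proof -
  interpret G: group G by fact
  have Bc: "B \<subseteq> carrier G" using assms(2) subgroup.subset by blast
  have "\<sigma> ` (B #>\<^bsub>G\<^esub> x) = (\<Union>h\<in>B. {\<sigma> (h \<otimes>\<^bsub>G\<^esub> x)})"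
    unfolding r_coset_def by auto
  also have "\<dots> = (\<Union>h\<in>B. {\<sigma> h \<otimes>\<^bsub>G\<^esub> \<sigma> x})"
    using Bc assms(3,5) by (intro SUP_cong refl) (auto simp: hom_mult)
  also have "\<dots> = (\<Union>h\<in>\<sigma> ` B. {h \<otimes>\<^bsub>G\<^esub> \<sigma> x})" by auto
  finally show ?thesis using assms(4) by (simp add: r_coset_def)
qed

lemma char_normal:
  assumes "group G" "characteristic_subgroup B G"
  shows "B \<lhd> G"
proof -
  interpret G: group G by fact
  have sg: "subgroup B G" and ch: "\<And>\<sigma>. \<sigma> \<in> auto G \<Longrightarrow> \<sigma> ` B = B"
    using assms(2) by (auto simp: characteristic_subgroup_def)
  have Bc: "B \<subseteq> carrier G" using sg subgroup.subset by blast
  show ?thesis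
  proof (rule G.normal_invI[OF sg])
    fix x h assume x: "x \<in> carrier G" and h: "h \<in> B"
    define c where "c = (\<lambda>y\<in>carrier G. x \<otimes>\<^bsub>G\<^esub> y \<otimes>\<^bsub>G\<^esub> inv\<^bsub>G\<^esub> x)"
    have hom: "c \<in> hom G G"
    proof (rule homI)
      fix y assume "y \<in> carrier G" thus "c y \<in> carrier G" using x by (simp add: c_def)
    next
      fix y z assume y: "y \<in> carrier G" and z: "z \<in> carrier G"
      show "c (y \<otimes>\<^bsub>G\<^esub> z) = c y \<otimes>\<^bsub>G\<^esub> c z"
      proof -
        have yz: "y \<otimes>\<^bsub>G\<^esub> z \<in> carrier G" using y z by simp
        have "c y \<otimes>\<^bsub>G\<^esub> c z = x \<otimes>\<^bsub>G\<^esub> (y \<otimes>\<^bsub>G\<^esub> (inv\<^bsub>G\<^esub> x \<otimes>\<^bsub>G\<^esub> (x \<otimes>\<^bsub>G\<^esub> (z \<otimes>\<^bsub>G\<^esub> inv\<^bsub>G\<^esub> x))))"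
          using x y z by (simp add: c_def G.m_assoc)
        also have "\<dots> = x \<otimes>\<^bsub>G\<^esub> (y \<otimes>\<^bsub>G\<^esub> (z \<otimes>\<^bsub>G\<^esub> inv\<^bsub>G\<^esub> x))"
          using x y z G.inv_cancel_l1[of x "z \<otimes>\<^bsub>G\<^esub> inv\<^bsub>G\<^esub> x"] by simp
        also have "\<dots> = c (y \<otimes>\<^bsub>G\<^esub> z)"
          using x y z yz by (simp add: c_def G.m_assoc)
        finally show ?thesis by simp
      qed
    qed
    have bij: "bij_betw c (carrier G) (carrier G)"
    proof (rule bij_betw_byWitness[where f'="\<lambda>y. inv\<^bsub>G\<^esub> x \<otimes>\<^bsub>G\<^esub> y \<otimes>\<^bsub>G\<^esub> x"])
      show "\<forall>y\<in>carrier G. inv\<^bsub>G\<^esub> x \<otimes>\<^bsub>G\<^esub> c y \<otimes>\<^bsub>G\<^esub> x = y"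
      proof
        fix y assume y: "y \<in> carrier G"
        have "inv\<^bsub>G\<^esub> x \<otimes>\<^bsub>G\<^esub> c y \<otimes>\<^bsub>G\<^esub> x = inv\<^bsub>G\<^esub> x \<otimes>\<^bsub>G\<^esub> (x \<otimes>\<^bsub>G\<^esub> (y \<otimes>\<^bsub>G\<^esub> (inv\<^bsub>G\<^esub> x \<otimes>\<^bsub>G\<^esub> x)))"
          using x y by (simp add: c_def G.m_assoc del: G.l_inv G.l_inv_ex)
        also have "\<dots> = y" using x y G.inv_cancel_l1[of x y] by simp
        finally show "inv\<^bsub>G\<^esub> x \<otimes>\<^bsub>G\<^esub> c y \<otimes>\<^bsub>G\<^esub> x = y" .
      qed
      show "\<forall>y\<in>carrier G. c (inv\<^bsub>G\<^esub> x \<otimes>\<^bsub>G\<^esub> y \<otimes>\<^bsub>G\<^esub> x) = y"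
      proof
        fix y assume y: "y \<in> carrier G"
        have "c (inv\<^bsub>G\<^esub> x \<otimes>\<^bsub>G\<^esub> y \<otimes>\<^bsub>G\<^esub> x) = x \<otimes>\<^bsub>G\<^esub> (inv\<^bsub>G\<^esub> x \<otimes>\<^bsub>G\<^esub> (y \<otimes>\<^bsub>G\<^esub> (x \<otimes>\<^bsub>G\<^esub> inv\<^bsub>G\<^esub> x)))"
          using x y by (simp add: c_def G.m_assoc del: G.r_inv)
        also have "\<dots> = y" using x y G.inv_cancel_l2[of x y] by simp
        finally show "c (inv\<^bsub>G\<^esub> x \<otimes>\<^bsub>G\<^esub> y \<otimes>\<^bsub>G\<^esub> x) = y" .
      qed
      show "c ` carrier G \<subseteq> carrier G" using x by (auto simp: c_def)
      show "(\<lambda>y. inv\<^bsub>G\<^esub> x \<otimes>\<^bsub>G\<^esub> y \<otimes>\<^bsub>G\<^esub> x) ` carrier G \<subseteq> carrier G" using x by auto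
    qed
    have "c \<in> extensional (carrier G)" unfolding c_def by simp
    hence "c \<in> auto G" using hom bij unfolding auto_def Bij_def by blast
    hence "c ` B = B" by (rule ch)
    moreover have "c h = x \<otimes>\<^bsub>G\<^esub> h \<otimes>\<^bsub>G\<^esub> inv\<^bsub>G\<^esub> x" using h Bc unfolding c_def by (simp add: subsetD)
    moreover have "c h \<in> c ` B" using h by (rule imageI)
    ultimately show "x \<otimes>\<^bsub>G\<^esub> h \<otimes>\<^bsub>G\<^esub> inv\<^bsub>G\<^esub> x \<in> B" by simp
  qed
qed

definition phi :: "('a, 'b) monoid_scheme \<Rightarrow> ('a, 'c) monoid_scheme \<Rightarrow> 'a set \<Rightarrow> 'a \<Rightarrow> 'a set \<Rightarrow> 'a set" where
  "phi Ad Mu B a = (\<lambda>C\<in>carrier (Ad Mod B). lam Ad Mu a ` C)"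

lemma lam_closed:
  assumes sb: "skew_brace Ad Mu" and a: "a \<in> carrier Ad" and x: "x \<in> carrier Ad"
  shows "lam Ad Mu a x \<in> carrier Ad"
  using lam_auto[OF sb a] x by (auto simp: auto_def hom_def)

lemma lam_inv:
  assumes sb: "skew_brace Ad Mu" and a: "a \<in> carrier Ad" and x: "x \<in> carrier Ad"
  shows "lam Ad Mu (inv\<^bsub>Mu\<^esub> a) (lam Ad Mu a x) = x"
proof -
  interpret M: group Mu using assms by (simp add: skew_brace_def)
  have C: "carrier Ad = carrier Mu" using assms by (simp add: skew_brace_def)
  have ia: "inv\<^bsub>Mu\<^esub> a \<in> carrier Ad" using a C by simp
  have "lam Ad Mu (inv\<^bsub>Mu\<^esub> a) (lam Ad Mu a x) = lam Ad Mu (inv\<^bsub>Mu\<^esub> a \<otimes>\<^bsub>Mu\<^esub> a) x"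
    using lam_mult[OF sb ia a x] by simp
  also have "\<dots> = x" using a C lam_one[OF sb x] by simp
  finally show ?thesis .
qed

lemma phi_coset:
  assumes sb: "skew_brace Ad Mu" and ch: "characteristic_subgroup B Ad"
    and a: "a \<in> carrier Ad" and x: "x \<in> carrier Ad"
  shows "phi Ad Mu B a (B #>\<^bsub>Ad\<^esub> x) = B #>\<^bsub>Ad\<^esub> lam Ad Mu a x"
proof -
  have G: "group Ad" using sb by (simp add: skew_brace_def)
  have sg: "subgroup B Ad" using ch by (simp add: characteristic_subgroup_def)
  have au: "lam Ad Mu a \<in> auto Ad" by (rule lam_auto[OF sb a])
  hence lB: "lam Ad Mu a ` B = B" using ch by (simp add: characteristic_subgroup_def)
  have hm: "lam Ad Mu a \<in> hom Ad Ad" using au by (simp add: auto_def)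
  have "B #>\<^bsub>Ad\<^esub> x \<in> carrier (Ad Mod B)" using x by (simp add: carrier_FactGroup)
  thus ?thesis using coset_img[OF G sg hm lB x] by (simp add: phi_def)
qed

lemma phi_closed:
  assumes sb: "skew_brace Ad Mu" and ch: "characteristic_subgroup B Ad"
    and a: "a \<in> carrier Ad" and C: "C \<in> carrier (Ad Mod B)"
  shows "phi Ad Mu B a C \<in> carrier (Ad Mod B)"
proof -
  obtain x where x: "x \<in> carrier Ad" and Cx: "C = B #>\<^bsub>Ad\<^esub> x" using C by (auto simp: carrier_FactGroup)
  show ?thesis using phi_coset[OF sb ch a x] Cx lam_closed[OF sb a x] by (simp add: carrier_FactGroup)
qed

lemma phi_auto:
  assumes sb: "skew_brace Ad Mu" and ch: "characteristic_subgroup B Ad"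
    and a: "a \<in> carrier Ad"
  shows "phi Ad Mu B a \<in> auto (Ad Mod B)"
proof -
  have G: "group Ad" using sb by (simp add: skew_brace_def)
  interpret M: group Mu using assms by (simp add: skew_brace_def)
  have Cr: "carrier Ad = carrier Mu" using assms by (simp add: skew_brace_def)
  interpret N: normal B Ad using char_normal[OF G ch] .
  interpret H: group_hom Ad Ad "lam Ad Mu a"
    using lam_auto[OF sb a] by (simp add: group_hom_def group_hom_axioms_def auto_def G)
  have hom: "phi Ad Mu B a \<in> hom (Ad Mod B) (Ad Mod B)"
  proof (rule homI)
    fix C assume "C \<in> carrier (Ad Mod B)"
    thus "phi Ad Mu B a C \<in> carrier (Ad Mod B)" by (rule phi_closed[OF sb ch a])
  next
    fix C D assume C: "C \<in> carrier (Ad Mod B)" and D: "D \<in> carrier (Ad Mod B)"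
    obtain x where x: "x \<in> carrier Ad" and Cx: "C = B #>\<^bsub>Ad\<^esub> x" using C by (auto simp: carrier_FactGroup)
    obtain y where y: "y \<in> carrier Ad" and Dy: "D = B #>\<^bsub>Ad\<^esub> y" using D by (auto simp: carrier_FactGroup)
    have xy: "x \<otimes>\<^bsub>Ad\<^esub> y \<in> carrier Ad" using x y by simp
    have "C \<otimes>\<^bsub>Ad Mod B\<^esub> D = B #>\<^bsub>Ad\<^esub> (x \<otimes>\<^bsub>Ad\<^esub> y)" using Cx Dy x y by (simp add: N.rcos_sum)
    hence "phi Ad Mu B a (C \<otimes>\<^bsub>Ad Mod B\<^esub> D) = B #>\<^bsub>Ad\<^esub> lam Ad Mu a (x \<otimes>\<^bsub>Ad\<^esub> y)"
      using phi_coset[OF sb ch a xy] by simp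
    also have "\<dots> = B #>\<^bsub>Ad\<^esub> (lam Ad Mu a x \<otimes>\<^bsub>Ad\<^esub> lam Ad Mu a y)" using x y by (simp add: H.hom_mult)
    also have "\<dots> = (B #>\<^bsub>Ad\<^esub> lam Ad Mu a x) <#>\<^bsub>Ad\<^esub> (B #>\<^bsub>Ad\<^esub> lam Ad Mu a y)"
      using x y lam_closed[OF sb a] by (simp add: N.rcos_sum)
    also have "\<dots> = phi Ad Mu B a C \<otimes>\<^bsub>Ad Mod B\<^esub> phi Ad Mu B a D"
      using Cx Dy phi_coset[OF sb ch a x] phi_coset[OF sb ch a y] by simp
    finally show "phi Ad Mu B a (C \<otimes>\<^bsub>Ad Mod B\<^esub> D) = phi Ad Mu B a C \<otimes>\<^bsub>Ad Mod B\<^esub> phi Ad Mu B a D" .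
  qed
  have ia: "inv\<^bsub>Mu\<^esub> a \<in> carrier Ad" using a Cr by simp
  have bij: "bij_betw (phi Ad Mu B a) (carrier (Ad Mod B)) (carrier (Ad Mod B))"
  proof (rule bij_betw_byWitness[where f'="phi Ad Mu B (inv\<^bsub>Mu\<^esub> a)"])
    show "\<forall>C\<in>carrier (Ad Mod B). phi Ad Mu B (inv\<^bsub>Mu\<^esub> a) (phi Ad Mu B a C) = C"
    proof
      fix C assume C: "C \<in> carrier (Ad Mod B)"
      obtain x where x: "x \<in> carrier Ad" and Cx: "C = B #>\<^bsub>Ad\<^esub> x" using C by (auto simp: carrier_FactGroup)
      show "phi Ad Mu B (inv\<^bsub>Mu\<^esub> a) (phi Ad Mu B a C) = C"
        using Cx phi_coset[OF sb ch a x] phi_coset[OF sb ch ia lam_closed[OF sb a x]] lam_inv[OF sb a x]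
        by simp
    qed
    show "\<forall>C\<in>carrier (Ad Mod B). phi Ad Mu B a (phi Ad Mu B (inv\<^bsub>Mu\<^esub> a) C) = C"
    proof
      fix C assume C: "C \<in> carrier (Ad Mod B)"
      obtain x where x: "x \<in> carrier Ad" and Cx: "C = B #>\<^bsub>Ad\<^esub> x" using C by (auto simp: carrier_FactGroup)
      have "lam Ad Mu a (lam Ad Mu (inv\<^bsub>Mu\<^esub> a) x) = x"
        using lam_inv[OF sb ia x] a Cr by simp
      thus "phi Ad Mu B a (phi Ad Mu B (inv\<^bsub>Mu\<^esub> a) C) = C"
        using Cx phi_coset[OF sb ch ia x] phi_coset[OF sb ch a lam_closed[OF sb ia x]]
        by simp
    qed
    show "phi Ad Mu B a ` carrier (Ad Mod B) \<subseteq> carrier (Ad Mod B)"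
      using phi_closed[OF sb ch a] by auto
    show "phi Ad Mu B (inv\<^bsub>Mu\<^esub> a) ` carrier (Ad Mod B) \<subseteq> carrier (Ad Mod B)"
      using phi_closed[OF sb ch ia] by auto
  qed
  show ?thesis using hom bij by (simp add: auto_def Bij_def phi_def)
qed

lemma phi_hom:
  assumes sb: "skew_brace Ad Mu" and ch: "characteristic_subgroup B Ad"
  shows "phi Ad Mu B \<in> hom Mu (AutoGroup (Ad Mod B))"
proof -
  interpret M: group Mu using assms by (simp add: skew_brace_def)
  have Cr: "carrier Ad = carrier Mu" using assms by (simp add: skew_brace_def)
  show ?thesis
  proof (rule homI)
    fix a assume "a \<in> carrier Mu"
    thus "phi Ad Mu B a \<in> carrier (AutoGroup (Ad Mod B))"
      using phi_auto[OF sb ch] Cr by (simp add: AutoGroup_def)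
  next
    fix a b assume a': "a \<in> carrier Mu" and b': "b \<in> carrier Mu"
    have a: "a \<in> carrier Ad" and b: "b \<in> carrier Ad" using a' b' Cr by auto
    have ab: "a \<otimes>\<^bsub>Mu\<^esub> b \<in> carrier Ad" using a' b' Cr by simp
    have pa: "phi Ad Mu B a \<in> Bij (carrier (Ad Mod B))" and pb: "phi Ad Mu B b \<in> Bij (carrier (Ad Mod B))"
      using phi_auto[OF sb ch a] phi_auto[OF sb ch b] by (auto simp: auto_def)
    have "phi Ad Mu B (a \<otimes>\<^bsub>Mu\<^esub> b) = compose (carrier (Ad Mod B)) (phi Ad Mu B a) (phi Ad Mu B b)"
    proof (rule ext)
      fix C show "phi Ad Mu B (a \<otimes>\<^bsub>Mu\<^esub> b) C = compose (carrier (Ad Mod B)) (phi Ad Mu B a) (phi Ad Mu B b) C"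
      proof (cases "C \<in> carrier (Ad Mod B)")
        case True
        obtain x where x: "x \<in> carrier Ad" and Cx: "C = B #>\<^bsub>Ad\<^esub> x" using True by (auto simp: carrier_FactGroup)
        have "phi Ad Mu B (a \<otimes>\<^bsub>Mu\<^esub> b) C = B #>\<^bsub>Ad\<^esub> lam Ad Mu a (lam Ad Mu b x)"
          using Cx phi_coset[OF sb ch ab x] lam_mult[OF sb a b x] by simp
        also have "\<dots> = phi Ad Mu B a (phi Ad Mu B b C)"
          using Cx phi_coset[OF sb ch b x] phi_coset[OF sb ch a lam_closed[OF sb b x]] by simp
        finally show ?thesis using True by (simp add: compose_def)
      next
        case False
        thus ?thesis by (simp add: compose_def phi_def)
      qed
    qed
    thus "phi Ad Mu B (a \<otimes>\<^bsub>Mu\<^esub> b) = phi Ad Mu B a \<otimes>\<^bsub>AutoGroup (Ad Mod B)\<^esub> phi Ad Mu B b"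
      using pa pb by (simp add: AutoGroup_def BijGroup_def)
  qed
qed

lemma word_hom:
  assumes "group_hom G H h" and g: "g \<in> UNIV \<rightarrow> carrier G"
  shows "word_value G w g \<in> carrier G \<and> h (word_value G w g) = word_value H w (h \<circ> g)"
proof (induction w)
  case Nil
  interpret group_hom G H h by fact
  show ?case by simp
next
  case (Cons p w)
  interpret group_hom G H h by fact
  obtain i e where p: "p = (i, e)" by (cases p)
  have gi: "g i \<in> carrier G" using g by auto
  show ?case using Cons.IH gi p by (cases e) (auto simp: hom_mult hom_inv)
qed

theorem proposition3p1:
  fixes Ad :: "('a, 'b) monoid_scheme" and Mu :: "('a, 'c) monoid_scheme"
    and B :: "'a set" and W :: "group_word set"
  assumes "skew_brace Ad Mu"
    and "characteristic_subgroup B Ad"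
    and "verbal_subgroup W (AutoGroup (Ad Mod B)) = {\<one>\<^bsub>AutoGroup (Ad Mod B)\<^esub>}"
  shows "\<forall>a\<in>verbal_subgroup W Mu. \<forall>b\<in>verbal_subgroup W Mu.
           B #>\<^bsub>Ad\<^esub> (a \<otimes>\<^bsub>Mu\<^esub> b) = B #>\<^bsub>Ad\<^esub> (a \<otimes>\<^bsub>Ad\<^esub> b)
         \<and> B #>\<^bsub>Ad\<^esub> (inv\<^bsub>Mu\<^esub> a) = B #>\<^bsub>Ad\<^esub> (inv\<^bsub>Ad\<^esub> a)"
proof -
  note sb = assms(1) and ch = assms(2)
  have G: "group Ad" using sb by (simp add: skew_brace_def)
  interpret A: group Ad by (rule G)
  interpret M: group Mu using sb by (simp add: skew_brace_def)
  have Cr: "carrier Ad = carrier Mu" using sb by (simp add: skew_brace_def)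
  interpret N: normal B Ad using char_normal[OF G ch] .
  have QG: "group (Ad Mod B)" by (rule N.factorgroup_is_group)
  have AG: "group (AutoGroup (Ad Mod B))" by (rule group.AutoGroup[OF QG])
  interpret P: group_hom Mu "AutoGroup (Ad Mod B)" "phi Ad Mu B"
    using phi_hom[OF sb ch] AG M.group_axioms by (simp add: group_hom_def group_hom_axioms_def)
  define S where "S = {word_value Mu w g | w g. w \<in> W \<and> g \<in> UNIV \<rightarrow> carrier Mu}"
  define S' where "S' = {word_value (AutoGroup (Ad Mod B)) w g | w g. w \<in> W \<and> g \<in> UNIV \<rightarrow> carrier (AutoGroup (Ad Mod B))}"
  have SC: "S \<subseteq> carrier Mu"
    using word_hom[OF P.group_hom_axioms] by (auto simp: S_def)
  have img: "phi Ad Mu B ` S \<subseteq> S'"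
  proof
    fix y assume "y \<in> phi Ad Mu B ` S"
    then obtain w g where w: "w \<in> W" and g: "g \<in> UNIV \<rightarrow> carrier Mu" and y: "y = phi Ad Mu B (word_value Mu w g)"
      by (auto simp: S_def)
    have "y = word_value (AutoGroup (Ad Mod B)) w (phi Ad Mu B \<circ> g)"
      using word_hom[OF P.group_hom_axioms g] y by simp
    moreover have "phi Ad Mu B \<circ> g \<in> UNIV \<rightarrow> carrier (AutoGroup (Ad Mod B))"
      using g P.hom_closed unfolding Pi_def by auto
    ultimately show "y \<in> S'" using w by (auto simp: S'_def)
  qed
  have triv: "\<And>a. a \<in> verbal_subgroup W Mu \<Longrightarrow> phi Ad Mu B a = \<one>\<^bsub>AutoGroup (Ad Mod B)\<^esub>"
  proof -
    fix a assume "a \<in> verbal_subgroup W Mu"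
    hence "a \<in> generate Mu S" by (simp add: verbal_subgroup_def S_def)
    hence "phi Ad Mu B a \<in> generate (AutoGroup (Ad Mod B)) (phi Ad Mu B ` S)"
      using P.generate_img[OF SC] by auto
    also have "\<dots> \<subseteq> generate (AutoGroup (Ad Mod B)) S'"
      using group.mono_generate[OF AG img] .
    also have "\<dots> = {\<one>\<^bsub>AutoGroup (Ad Mod B)\<^esub>}" using assms(3) by (simp add: verbal_subgroup_def S'_def)
    finally show "phi Ad Mu B a = \<one>\<^bsub>AutoGroup (Ad Mod B)\<^esub>" by simp
  qed
  have key: "\<And>a b. a \<in> verbal_subgroup W Mu \<Longrightarrow> b \<in> carrier Ad \<Longrightarrow> B #>\<^bsub>Ad\<^esub> lam Ad Mu a b = B #>\<^bsub>Ad\<^esub> b"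
  proof -
    fix a b assume aW: "a \<in> verbal_subgroup W Mu" and b: "b \<in> carrier Ad"
    have a: "a \<in> carrier Ad" using aW M.generate_in_carrier[OF SC] Cr
      by (simp add: verbal_subgroup_def S_def)
    have Bb: "B #>\<^bsub>Ad\<^esub> b \<in> carrier (Ad Mod B)" using b by (simp add: carrier_FactGroup)
    have "phi Ad Mu B a (B #>\<^bsub>Ad\<^esub> b) = B #>\<^bsub>Ad\<^esub> b"
      using triv[OF aW] Bb by (simp add: AutoGroup_def BijGroup_def)
    thus "B #>\<^bsub>Ad\<^esub> lam Ad Mu a b = B #>\<^bsub>Ad\<^esub> b" using phi_coset[OF sb ch a b] by simp
  qed
  show ?thesis
  proof (intro ballI conjI)
    fix a b assume aW: "a \<in> verbal_subgroup W Mu" and bW: "b \<in> verbal_subgroup W Mu"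
    have a: "a \<in> carrier Ad" using aW M.generate_in_carrier[OF SC] Cr
      by (simp add: verbal_subgroup_def S_def)
    have b: "b \<in> carrier Ad" using bW M.generate_in_carrier[OF SC] Cr
      by (simp add: verbal_subgroup_def S_def)
    have ab: "a \<otimes>\<^bsub>Mu\<^esub> b \<in> carrier Ad" using a b Cr by simp
    have lb: "lam Ad Mu a b \<in> carrier Ad" by (rule lam_closed[OF sb a b])
    have "a \<otimes>\<^bsub>Mu\<^esub> b = a \<otimes>\<^bsub>Ad\<^esub> lam Ad Mu a b"
      using a b ab by (simp add: lam_def A.inv_cancel_l2)
    hence "B #>\<^bsub>Ad\<^esub> (a \<otimes>\<^bsub>Mu\<^esub> b) = (B #>\<^bsub>Ad\<^esub> a) <#>\<^bsub>Ad\<^esub> (B #>\<^bsub>Ad\<^esub> lam Ad Mu a b)"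
      using a lb by (simp add: N.rcos_sum)
    also have "\<dots> = (B #>\<^bsub>Ad\<^esub> a) <#>\<^bsub>Ad\<^esub> (B #>\<^bsub>Ad\<^esub> b)" using key[OF aW b] by simp
    also have "\<dots> = B #>\<^bsub>Ad\<^esub> (a \<otimes>\<^bsub>Ad\<^esub> b)" using a b by (simp add: N.rcos_sum)
    finally show "B #>\<^bsub>Ad\<^esub> (a \<otimes>\<^bsub>Mu\<^esub> b) = B #>\<^bsub>Ad\<^esub> (a \<otimes>\<^bsub>Ad\<^esub> b)" .
    have ia: "inv\<^bsub>Mu\<^esub> a \<in> carrier Ad" using a Cr by simp
    have "lam Ad Mu a (inv\<^bsub>Mu\<^esub> a) = inv\<^bsub>Ad\<^esub> a \<otimes>\<^bsub>Ad\<^esub> \<one>\<^bsub>Mu\<^esub>"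
      using ia a Cr by (simp add: lam_def)
    also have "\<dots> = inv\<^bsub>Ad\<^esub> a" using a by (simp add: brace_one[OF sb])
    finally have "lam Ad Mu a (inv\<^bsub>Mu\<^esub> a) = inv\<^bsub>Ad\<^esub> a" .
    thus "B #>\<^bsub>Ad\<^esub> (inv\<^bsub>Mu\<^esub> a) = B #>\<^bsub>Ad\<^esub> (inv\<^bsub>Ad\<^esub> a)" using key[OF aW ia] by simp
  qed
qed

end
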